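(* Let $\mu,\nu\in\mathcal{P}(\mathcal{X})$, $0<m_1\le m_2<\infty$, $K:\mathcal{X}\times\mathcal{X}\to(0,1]$ measurable with lower decay $l$, and let $(\alpha_1,\tilde\alpha_1)$, $(\alpha_2,\tilde\alpha_2)$ be pairs of tail functions (with $\mu(B_{m_1})>0$, $\nu(B_{m_1})>0$, $\alpha_1,\alpha_2>0$). For $f\in\mathcal{F}^{\mu,norm}_{\alpha_1,\tilde\alpha_1}$, $g\in\mathcal{G}^{\nu,norm}_{\alpha_2,\tilde\alpha_2}$ and $r>0$, \begin{align*} \int L_{K^\top,\nu}(g)f\,d\mu\ge\ &\frac{1+l(r)}{2}-\frac{1-l(r)}{2}\int_{B_r}|f|\,d\mu\int_{B_r}|g|\,d\nu\\ &-\int|f|\,d\mu\int_{B_r^{\mathsf c}}|g|\,d\nu-\int_{B_r^{\mathsf c}}|f|\,d\mu\int_{B_r}|g|\,d\nu, \end{align*} and $\int L_{K^\top,\nu}(g)f\,d\mu\le\int|f|\,d\mu\int|g|\,d\nu$.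
   Context: $\mathcal{X}$ is a Polish space with metric $d_{\mathcal{X}}$, $x_0$ fixed, $B_r=\{x:d_{\mathcal{X}}(x_0,x)\le r\}$, $B_r^{\mathsf c}=\mathcal{X}\setminus B_r$. A non-increasing $l:[0,\infty)\to[0,\infty)$ is a lower decay of $K$ if $\inf_{x,y\in B_r}K(x,y)\ge l(r)$ for all $r>0$. $L_{K^\top,\nu}g(x)=\int K(y,x)g(y)\,\nu(dy)$. A tail function is a non-increasing $\alpha:(0,\infty)\to[0,\infty)$ with $\lim_{r\to\infty}\alpha(r)=0$. For $\rho\in\mathcal{P}(\mathcal{X})$: $\mathcal{F}^{\rho}_{\alpha,\tilde\alpha}$ is the set of $f\in L^2(\rho)$ with $f\mathbf 1_{B_{m_2}}\ge0$ $\rho$-a.s., $\int_{B_r^{\mathsf c}}f_+\,d\rho\le\alpha(r)\int f\,d\rho$ for all $r\ge m_1$, $\int_{B_r^{\mathsf c}}f_-\,d\rho\le\tilde\alpha(r)\int f\,d\rho$ for all $r\ge m_2$; $\mathcal{G}^{\rho}_{\alpha,\tilde\alpha}=\{g\in L^2(\rho):\int fg\,d\rho\ge0\ \forall f\in\mathcal{F}^{\rho}_{\alpha,\tilde\alpha}\}$; superscript $norm$ denotes elements with $\int\cdot\,d\rho=1$. *)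

theory Defs
  imports "HOL-Analysis.Analysis" "HOL-Probability.Probability"
begin

definition Bset :: "'a::metric_space \<Rightarrow> real \<Rightarrow> 'a set" where
  "Bset x0 r = {x. dist x0 x \<le> r}"

definition lower_decay :: "'a::metric_space \<Rightarrow> ('a \<Rightarrow> 'a \<Rightarrow> real) \<Rightarrow> (real \<Rightarrow> real) \<Rightarrow> bool" where
  "lower_decay x0 K l \<longleftrightarrow>
     (\<forall>s t. 0 \<le> s \<longrightarrow> s \<le> t \<longrightarrow> l t \<le> l s) \<and>
     (\<forall>r\<ge>0. 0 \<le> l r) \<and>
     (\<forall>r>0. \<forall>x\<in>Bset x0 r. \<forall>y\<in>Bset x0 r. l r \<le> K x y)"

definition tail_function :: "(real \<Rightarrow> real) \<Rightarrow> bool" where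
  "tail_function \<alpha> \<longleftrightarrow>
     (\<forall>s t. 0 < s \<longrightarrow> s \<le> t \<longrightarrow> \<alpha> t \<le> \<alpha> s) \<and>
     (\<forall>r>0. 0 \<le> \<alpha> r) \<and>
     (\<alpha> \<longlongrightarrow> 0) at_top"

definition L2 :: "'a measure \<Rightarrow> ('a \<Rightarrow> real) \<Rightarrow> bool" where
  "L2 M f \<longleftrightarrow> f \<in> borel_measurable M \<and> integrable M (\<lambda>x. (f x)\<^sup>2)"

definition Fset :: "'a::metric_space measure \<Rightarrow> 'a \<Rightarrow> real \<Rightarrow> real \<Rightarrow> (real \<Rightarrow> real) \<Rightarrow> (real \<Rightarrow> real)
    \<Rightarrow> ('a \<Rightarrow> real) set" where
  "Fset M x0 m1 m2 \<alpha> \<alpha>' = {f. L2 M f \<and>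
     (AE x in M. indicator (Bset x0 m2) x * f x \<ge> 0) \<and>
     (\<forall>r\<ge>m1. set_lebesgue_integral M (- Bset x0 r) (\<lambda>x. max (f x) 0) \<le> \<alpha> r * integral\<^sup>L M f) \<and>
     (\<forall>r\<ge>m2. set_lebesgue_integral M (- Bset x0 r) (\<lambda>x. max (- f x) 0) \<le> \<alpha>' r * integral\<^sup>L M f)}"

definition Gset :: "'a::metric_space measure \<Rightarrow> 'a \<Rightarrow> real \<Rightarrow> real \<Rightarrow> (real \<Rightarrow> real) \<Rightarrow> (real \<Rightarrow> real)
    \<Rightarrow> ('a \<Rightarrow> real) set" where
  "Gset M x0 m1 m2 \<alpha> \<alpha>' = {g. L2 M g \<and>
     (\<forall>f\<in>Fset M x0 m1 m2 \<alpha> \<alpha>'. integral\<^sup>L M (\<lambda>x. f x * g x) \<ge> 0)}"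

definition Fnorm where
  "Fnorm M x0 m1 m2 \<alpha> \<alpha>' = {f \<in> Fset M x0 m1 m2 \<alpha> \<alpha>'. integral\<^sup>L M f = 1}"

definition Gnorm where
  "Gnorm M x0 m1 m2 \<alpha> \<alpha>' = {g \<in> Gset M x0 m1 m2 \<alpha> \<alpha>'. integral\<^sup>L M g = 1}"

definition LKT :: "('a \<Rightarrow> 'a \<Rightarrow> real) \<Rightarrow> 'a measure \<Rightarrow> ('a \<Rightarrow> real) \<Rightarrow> 'a \<Rightarrow> real" where
  "LKT K \<nu> g = (\<lambda>x. \<integral>y. K y x * g y \<partial>\<nu>)"

end

theory Submission
  imports Defs
begin

lemma my_abs_bound:
  fixes f :: "'b \<Rightarrow> real"
  assumes "integrable M f" "integrable M g" "\<And>x. x \<in> space M \<Longrightarrow> \<bar>f x\<bar> \<le> g x"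
  shows "\<bar>\<integral>x. f x \<partial>M\<bar> \<le> (\<integral>x. g x \<partial>M)"
proof -
  have "\<bar>\<integral>x. f x \<partial>M\<bar> \<le> (\<integral>x. \<bar>f x\<bar> \<partial>M)" by (rule integral_abs_bound)
  also have "\<dots> \<le> (\<integral>x. g x \<partial>M)" using assms by (intro integral_mono) auto
  finally show ?thesis .
qed

theorem lemma4p4:
  fixes \<mu> \<nu> :: "'a::polish_space measure" and x0 :: 'a
    and K :: "'a \<Rightarrow> 'a \<Rightarrow> real" and l \<alpha>1 \<alpha>1' \<alpha>2 \<alpha>2' :: "real \<Rightarrow> real"
    and m1 m2 r :: real and f g :: "'a \<Rightarrow> real"
  assumes "prob_space \<mu>" and "prob_space \<nu>"
    and "sets \<mu> = sets borel" and "sets \<nu> = sets borel"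
    and "0 < m1" and "m1 \<le> m2"
    and "(\<lambda>(x, y). K x y) \<in> borel_measurable (borel \<Otimes>\<^sub>M borel)"
    and "\<And>x y. 0 < K x y \<and> K x y \<le> 1"
    and "lower_decay x0 K l"
    and "tail_function \<alpha>1" and "tail_function \<alpha>1'"
    and "tail_function \<alpha>2" and "tail_function \<alpha>2'"
    and "measure \<mu> (Bset x0 m1) > 0" and "measure \<nu> (Bset x0 m1) > 0"
    and "\<And>s. 0 < s \<Longrightarrow> 0 < \<alpha>1 s" and "\<And>s. 0 < s \<Longrightarrow> 0 < \<alpha>2 s"
    and "f \<in> Fnorm \<mu> x0 m1 m2 \<alpha>1 \<alpha>1'"
    and "g \<in> Gnorm \<nu> x0 m1 m2 \<alpha>2 \<alpha>2'"
    and "0 < r"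
  shows "(\<integral>x. LKT K \<nu> g x * f x \<partial>\<mu>) \<ge>
           ((1 + l r) / 2
           - (1 - l r) / 2 * set_lebesgue_integral \<mu> (Bset x0 r) (\<lambda>x. \<bar>f x\<bar>)
                           * set_lebesgue_integral \<nu> (Bset x0 r) (\<lambda>x. \<bar>g x\<bar>)
           - (\<integral>x. \<bar>f x\<bar> \<partial>\<mu>) * set_lebesgue_integral \<nu> (- Bset x0 r) (\<lambda>x. \<bar>g x\<bar>)
           - set_lebesgue_integral \<mu> (- Bset x0 r) (\<lambda>x. \<bar>f x\<bar>)
               * set_lebesgue_integral \<nu> (Bset x0 r) (\<lambda>x. \<bar>g x\<bar>))
         \<and> (\<integral>x. LKT K \<nu> g x * f x \<partial>\<mu>) \<le> (\<integral>x. \<bar>f x\<bar> \<partial>\<mu>) * (\<integral>x. \<bar>g x\<bar> \<partial>\<nu>)"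
proof -
  interpret mu: prob_space \<mu> by fact
  interpret nu: prob_space \<nu> by fact
  define B where "B = Bset x0 r"
  define c where "c = (1 + l r) / 2"
  define d where "d = (1 - l r) / 2"
  define h where "h = LKT K \<nu> g"
  have Bcb: "B = cball x0 r" unfolding B_def Bset_def cball_def by simp
  have Bsets: "B \<in> sets borel" unfolding Bcb by simp
  have spmu: "space \<mu> = UNIV" using assms(3) sets_eq_imp_space_eq by fastforce
  have spnu: "space \<nu> = UNIV" using assms(4) sets_eq_imp_space_eq by fastforce
  have Bmu: "B \<in> sets \<mu>" "- B \<in> sets \<mu>" using Bsets assms(3) by auto
  have Bnu: "B \<in> sets \<nu>" "- B \<in> sets \<nu>" using Bsets assms(4) by auto
  have ld: "\<forall>x\<in>B. \<forall>y\<in>B. l r \<le> K x y" "0 \<le> l r"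
    using assms(9) assms(20) unfolding lower_decay_def B_def by auto
  have x0B: "x0 \<in> B" using assms(20) unfolding B_def Bset_def by simp
  have l1: "l r \<le> 1" using ld(1) x0B assms(8)[of x0 x0] by fastforce
  have fL2: "L2 \<mu> f" and f1: "integral\<^sup>L \<mu> f = 1"
    using assms(18) unfolding Fnorm_def Fset_def by auto
  have gL2: "L2 \<nu> g" and g1: "integral\<^sup>L \<nu> g = 1"
    using assms(19) unfolding Gnorm_def Gset_def by auto
  have fm[measurable]: "f \<in> borel_measurable \<mu>" using fL2 unfolding L2_def by auto
  have gm[measurable]: "g \<in> borel_measurable \<nu>" using gL2 unfolding L2_def by auto
  have fi: "integrable \<mu> f" using fL2 unfolding L2_def by (auto intro: mu.square_integrable_imp_integrable)
  have gi: "integrable \<nu> g" using gL2 unfolding L2_def by (auto intro: nu.square_integrable_imp_integrable)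
  have Km: "(\<lambda>(x, y). K y x * g y) \<in> borel_measurable (\<mu> \<Otimes>\<^sub>M \<nu>)"
  proof -
    have "(\<lambda>(x, y). K x y) \<in> borel_measurable (\<nu> \<Otimes>\<^sub>M \<mu>)"
      using assms(7) by (simp add: measurable_cong_sets[OF sets_pair_measure_cong[OF assms(4) assms(3)] refl])
    then have "(\<lambda>p. (\<lambda>(x, y). K x y) (snd p, fst p)) \<in> borel_measurable (\<mu> \<Otimes>\<^sub>M \<nu>)"
      by measurable
    moreover have "(\<lambda>p. g (snd p)) \<in> borel_measurable (\<mu> \<Otimes>\<^sub>M \<nu>)" by measurable
    ultimately show ?thesis by (auto simp: case_prod_beta intro: borel_measurable_times)
  qed
  have hm: "h \<in> borel_measurable \<mu>"
    unfolding h_def LKT_def using nu.borel_measurable_lebesgue_integral[of "\<lambda>x y. K y x * g y" \<mu>] Km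
    by simp
  have Kym: "(\<lambda>y. K y x) \<in> borel_measurable \<nu>" for x
  proof -
    have "(\<lambda>(x, y). K x y) \<in> borel_measurable (\<nu> \<Otimes>\<^sub>M \<mu>)"
      using assms(7) by (simp add: measurable_cong_sets[OF sets_pair_measure_cong[OF assms(4) assms(3)] refl])
    moreover have "(\<lambda>y. (y, x)) \<in> measurable \<nu> (\<nu> \<Otimes>\<^sub>M \<mu>)" using spmu by (intro measurable_Pair measurable_const) auto
    ultimately have "(\<lambda>y. (\<lambda>(x, y). K x y) (y, x)) \<in> borel_measurable \<nu>"
      by (rule measurable_compose_rev)
    then show ?thesis by simp
  qed
  have Kgi: "integrable \<nu> (\<lambda>y. K y x * g y)" for x
    by (rule Bochner_Integration.integrable_bound[OF integrable_abs[OF gi]]) (use Kym in \<open>auto simp: abs_mult intro!: AE_I2 mult_left_le_one_le\<close>, metis abs_of_pos assms(8) order_less_imp_le)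
  have Kcgi: "integrable \<nu> (\<lambda>y. (K y x - c) * g y)" for x
    using Kgi[of x] gi by (simp add: left_diff_distrib)
  have gai: "integrable \<nu> (\<lambda>y. \<bar>g y\<bar>)" using gi by auto
  have fai: "integrable \<mu> (\<lambda>y. \<bar>f y\<bar>)" using fi by auto
  define GB where "GB = set_lebesgue_integral \<nu> B (\<lambda>x. \<bar>g x\<bar>)"
  define Gc where "Gc = set_lebesgue_integral \<nu> (- B) (\<lambda>x. \<bar>g x\<bar>)"
  define FB where "FB = set_lebesgue_integral \<mu> B (\<lambda>x. \<bar>f x\<bar>)"
  define Fc where "Fc = set_lebesgue_integral \<mu> (- B) (\<lambda>x. \<bar>f x\<bar>)"
  have GBe: "GB = (\<integral>y. indicator B y * \<bar>g y\<bar> \<partial>\<nu>)" unfolding GB_def set_lebesgue_integral_def by simp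
  have Gce: "Gc = (\<integral>y. indicator (- B) y * \<bar>g y\<bar> \<partial>\<nu>)" unfolding Gc_def set_lebesgue_integral_def by simp
  have FBe: "FB = (\<integral>y. indicator B y * \<bar>f y\<bar> \<partial>\<mu>)" unfolding FB_def set_lebesgue_integral_def by simp
  have Fce: "Fc = (\<integral>y. indicator (- B) y * \<bar>f y\<bar> \<partial>\<mu>)" unfolding Fc_def set_lebesgue_integral_def by simp
  have gBi: "integrable \<nu> (\<lambda>y. indicator B y * \<bar>g y\<bar>)" "integrable \<nu> (\<lambda>y. indicator (- B) y * \<bar>g y\<bar>)"
    using gai Bnu integrable_mult_indicator[of _ \<nu> "\<lambda>y. \<bar>g y\<bar>"] by auto
  have fBi: "integrable \<mu> (\<lambda>y. indicator B y * \<bar>f y\<bar>)" "integrable \<mu> (\<lambda>y. indicator (- B) y * \<bar>f y\<bar>)"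
    using fai Bmu integrable_mult_indicator[of _ \<mu> "\<lambda>y. \<bar>f y\<bar>"] by auto
  have ind: "indicator B y + indicator (- B) y = (1::real)" for y
    by (auto simp: indicator_def)
  have Gsum: "(\<integral>y. \<bar>g y\<bar> \<partial>\<nu>) = GB + Gc"
  proof -
    have "(\<integral>y. \<bar>g y\<bar> \<partial>\<nu>) = (\<integral>y. indicator B y * \<bar>g y\<bar> + indicator (- B) y * \<bar>g y\<bar> \<partial>\<nu>)"
      by (rule Bochner_Integration.integral_cong) (auto simp: indicator_def)
    also have "\<dots> = GB + Gc" unfolding GBe Gce by (rule Bochner_Integration.integral_add[OF gBi])
    finally show ?thesis .
  qed
  have Fsum: "(\<integral>y. \<bar>f y\<bar> \<partial>\<mu>) = FB + Fc"
  proof -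
    have "(\<integral>y. \<bar>f y\<bar> \<partial>\<mu>) = (\<integral>y. indicator B y * \<bar>f y\<bar> + indicator (- B) y * \<bar>f y\<bar> \<partial>\<mu>)"
      by (rule Bochner_Integration.integral_cong) (auto simp: indicator_def)
    also have "\<dots> = FB + Fc" unfolding FBe Fce by (rule Bochner_Integration.integral_add[OF fBi])
    finally show ?thesis .
  qed
  define E where "E x = indicator B x * (d * GB + Gc) + indicator (- B) x * (GB + Gc)" for x
  have hc: "h x - c = (\<integral>y. (K y x - c) * g y \<partial>\<nu>)" for x
  proof -
    have "(\<integral>y. (K y x - c) * g y \<partial>\<nu>) = (\<integral>y. K y x * g y - c * g y \<partial>\<nu>)"
      by (simp add: left_diff_distrib)
    also have "\<dots> = h x - c * integral\<^sup>L \<nu> g"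
      unfolding h_def LKT_def using Kgi[of x] gi by simp
    finally show ?thesis using g1 by simp
  qed
  have hE: "\<bar>h x - c\<bar> \<le> E x" for x
  proof -
    define w where "w y = (if x \<in> B then indicator B y * d + indicator (- B) y else 1)" for y
    have wb: "\<bar>K y x - c\<bar> \<le> w y" for y
    proof -
      have "0 < K y x" "K y x \<le> 1" using assms(8) by auto
      moreover have "x \<in> B \<Longrightarrow> y \<in> B \<Longrightarrow> l r \<le> K y x" using ld by auto
      ultimately show ?thesis using ld(2) l1 unfolding w_def c_def d_def indicator_def by (auto simp: abs_le_iff field_simps)
    qed
    have wi: "integrable \<nu> (\<lambda>y. w y * \<bar>g y\<bar>)"
    proof (cases "x \<in> B")
      case True
      have "(\<lambda>y. w y * \<bar>g y\<bar>) = (\<lambda>y. d * (indicator B y * \<bar>g y\<bar>) + indicator (- B) y * \<bar>g y\<bar>)"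
        unfolding w_def using True by (auto simp: algebra_simps)
      then show ?thesis using gBi by simp
    next
      case False
      then show ?thesis unfolding w_def using gai by simp
    qed
    have "\<bar>h x - c\<bar> \<le> (\<integral>y. w y * \<bar>g y\<bar> \<partial>\<nu>)"
      unfolding hc
      by (rule my_abs_bound[OF Kcgi wi]) (auto simp: abs_mult intro!: mult_right_mono wb)
    also have "\<dots> = E x"
    proof (cases "x \<in> B")
      case True
      have "(\<integral>y. w y * \<bar>g y\<bar> \<partial>\<nu>) = (\<integral>y. d * (indicator B y * \<bar>g y\<bar>) + indicator (- B) y * \<bar>g y\<bar> \<partial>\<nu>)"
        unfolding w_def using True by (simp add: algebra_simps)
      also have "\<dots> = d * GB + Gc" unfolding GBe Gce using gBi by simp
      finally show ?thesis using True unfolding E_def by simp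
    next
      case False
      then show ?thesis unfolding w_def E_def using Gsum by simp
    qed
    finally show ?thesis .
  qed
  have Eb: "\<bar>h x\<bar> \<le> GB + Gc" for x
  proof -
    have "\<bar>h x\<bar> \<le> (\<integral>y. \<bar>g y\<bar> \<partial>\<nu>)"
      unfolding h_def LKT_def
      by (rule my_abs_bound[OF Kgi gai]) (simp add: abs_mult, metis abs_ge_zero abs_of_pos assms(8) mult_left_le_one_le order_less_imp_le)
    then show ?thesis using Gsum by simp
  qed
  have hfi: "integrable \<mu> (\<lambda>x. h x * f x)"
    by (rule Bochner_Integration.integrable_bound[OF integrable_mult_right[OF fai, of "GB + Gc"]])
       (use hm in \<open>auto simp: abs_mult intro!: AE_I2\<close>, metis Eb abs_ge_self abs_ge_zero mult_right_mono order_trans)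
  have Efi: "integrable \<mu> (\<lambda>x. c * f x - \<bar>f x\<bar> * E x)"
  proof -
    have "(\<lambda>x. c * f x - \<bar>f x\<bar> * E x) = (\<lambda>x. c * f x - ((d * GB + Gc) * (indicator B x * \<bar>f x\<bar>) + (GB + Gc) * (indicator (- B) x * \<bar>f x\<bar>)))"
      unfolding E_def by (auto simp: algebra_simps)
    then show ?thesis using fBi fi by simp
  qed
  have intE: "(\<integral>x. c * f x - \<bar>f x\<bar> * E x \<partial>\<mu>) = c - (d * GB + Gc) * FB - (GB + Gc) * Fc"
  proof -
    have "(\<lambda>x. c * f x - \<bar>f x\<bar> * E x) = (\<lambda>x. c * f x - ((d * GB + Gc) * (indicator B x * \<bar>f x\<bar>) + (GB + Gc) * (indicator (- B) x * \<bar>f x\<bar>)))"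
      unfolding E_def by (auto simp: algebra_simps)
    then show ?thesis using fBi fi f1 unfolding FBe Fce by simp
  qed
  have lower: "(\<integral>x. h x * f x \<partial>\<mu>) \<ge> c - (d * GB + Gc) * FB - (GB + Gc) * Fc"
  proof -
    have "c * f x - \<bar>f x\<bar> * E x \<le> h x * f x" for x
    proof -
      have "h x * f x = c * f x + (h x - c) * f x" by (simp add: algebra_simps)
      moreover have "(h x - c) * f x \<ge> - (\<bar>f x\<bar> * E x)"
      proof -
        have "\<bar>(h x - c) * f x\<bar> \<le> E x * \<bar>f x\<bar>" unfolding abs_mult by (rule mult_right_mono[OF hE]) simp
        then show ?thesis by (simp add: mult.commute)
      qed
      ultimately show ?thesis by simp
    qed
    then have "(\<integral>x. c * f x - \<bar>f x\<bar> * E x \<partial>\<mu>) \<le> (\<integral>x. h x * f x \<partial>\<mu>)"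
      by (intro integral_mono[OF Efi hfi])
    then show ?thesis using intE by simp
  qed
  have upper: "(\<integral>x. h x * f x \<partial>\<mu>) \<le> (\<integral>x. \<bar>f x\<bar> \<partial>\<mu>) * (\<integral>x. \<bar>g x\<bar> \<partial>\<nu>)"
  proof -
    have "(\<integral>x. h x * f x \<partial>\<mu>) \<le> (\<integral>x. (GB + Gc) * \<bar>f x\<bar> \<partial>\<mu>)"
    proof (rule integral_mono[OF hfi])
      show "integrable \<mu> (\<lambda>x. (GB + Gc) * \<bar>f x\<bar>)" using fai by simp
      fix x
      have "h x * f x \<le> \<bar>h x\<bar> * \<bar>f x\<bar>" by (metis abs_ge_self abs_mult)
      also have "\<dots> \<le> (GB + Gc) * \<bar>f x\<bar>" by (rule mult_right_mono[OF Eb]) simp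
      finally show "h x * f x \<le> (GB + Gc) * \<bar>f x\<bar>" .
    qed
    then show ?thesis using Gsum by (simp add: mult.commute)
  qed
  show ?thesis
    using lower upper Fsum
    unfolding h_def c_def d_def GB_def Gc_def FB_def Fc_def B_def
    by (simp add: algebra_simps)
qed

end
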